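(* Let $\lambda=(\lambda_1,\dots,\lambda_r)$ be a partition of $n$ with conjugate $\lambda'=(\lambda'_1,\dots,\lambda'_{r'})$. Then $h_{2,1}(\lambda)$ is the largest index $j$ such that $x_j$ occurs in a monomial with non-zero coefficient of $q_{[\lambda_2,\dots,\lambda_r]}$, and $h_{1,2}(\lambda)$ is the largest index $j$ such that $x_j$ occurs in a monomial with non-zero coefficient of $q_{[\lambda'_2,\dots,\lambda'_{r'}]}$ (whenever these hook lengths are positive).
   Context: For a partition $\lambda$ and a cell $(x,y)$ of its Young diagram (row $x$, column $y$), $h_{x,y}(\lambda)$ denotes the hook length at $(x,y)$ (cells to the right in the row, plus cells below in the column, plus one); it is $0$ if $(x,y)$ is not a cell. For a partition $\mu$ of $m$, the character polynomial is $q_\mu(x_1,\dots,x_m)=\downarrow\Big(\sum_{\alpha\vdash m}\frac{\chi_\mu(\alpha)}{z_\alpha}\prod_{k=1}^m (k x_k-1)^{a_k}\Big)$, where $\alpha=(1^{a_1},\dots,m^{a_m})$ ranges over cycle types of $S_m$, $\chi_\mu$ is the irreducible character of $S_m$ indexed by $\mu$, $z_\alpha=\prod_k a_k!\,k^{a_k}$, and $\downarrow$ is the linear map sending $x_1^{c_1}\cdots x_m^{c_m}$ to $(x_1)_{c_1}\cdots(x_m)_{c_m}$ (falling factorials). One has $\chi_\lambda(\alpha)=q_{[\lambda_2,\dots,\lambda_r]}(a_1,\dots,a_{n-\lambda_1})$. *)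

theory Defs
  imports Complex_Main "HOL-Library.Poly_Mapping"
begin

text \<open>A partition is a weakly decreasing list of positive naturals
  (lam ! 0 = lambda_1, ...).\<close>
definition is_partition :: "nat list \<Rightarrow> bool" where
  "is_partition lam \<longleftrightarrow> sorted_wrt (\<lambda>a b. b \<le> a) lam \<and> 0 \<notin> set lam"

definition conjugate :: "nat list \<Rightarrow> nat list" where
  "conjugate lam = (if lam = [] then []
     else map (\<lambda>j. length (filter (\<lambda>x. j \<le> x) lam)) [1..<Suc (hd lam)])"

text \<open>Hook length at cell (x,y) (row x, column y, both 1-based); 0 if not a cell.\<close>
definition hook :: "nat list \<Rightarrow> nat \<Rightarrow> nat \<Rightarrow> nat" where
  "hook lam x y = (if 1 \<le> x \<and> x \<le> length lam \<and> 1 \<le> y \<and> y \<le> lam ! (x - 1)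
     then (lam ! (x - 1) - y) + (conjugate lam ! (y - 1) - x) + 1 else 0)"

definition beta_set :: "nat list \<Rightarrow> nat set" where
  "beta_set lam = {lam ! i + (length lam - 1 - i) | i. i < length lam}"

text \<open>Murnaghan--Nakayama: removing a rim hook of length k corresponds to moving a bead
  b to b - k (unoccupied); the sign is (-1)^(leg length) = (-1)^(number of beads
  strictly between b - k and b).\<close>
fun mn :: "nat set \<Rightarrow> nat list \<Rightarrow> int" where
  "mn B [] = (if B = {0..<card B} then 1 else 0)"
| "mn B (k # ks) =
     (\<Sum>b\<in>{b\<in>B. k \<le> b \<and> b - k \<notin> B}.
        (-1) ^ card {c\<in>B. b - k < c \<and> c < b} * mn (insert (b - k) (B - {b})) ks)"

text \<open>chi lam alpha: value of the irreducible character of S_n indexed by the partition lam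
  on the conjugacy class of cycle type alpha (a list of the cycle lengths).\<close>
definition chi :: "nat list \<Rightarrow> nat list \<Rightarrow> int" where
  "chi lam alpha = mn (beta_set lam) alpha"

definition partitions_of :: "nat \<Rightarrow> nat list set" where
  "partitions_of m = {alpha. is_partition alpha \<and> sum_list alpha = m}"

definition zee :: "nat list \<Rightarrow> nat" where
  "zee alpha = (\<Prod>k\<in>set alpha. fact (count_list alpha k) * k ^ count_list alpha k)"

type_synonym mpoly = "(nat \<Rightarrow>\<^sub>0 nat) \<Rightarrow>\<^sub>0 rat"

definition Var :: "nat \<Rightarrow> mpoly" where
  "Var k = Poly_Mapping.single (Poly_Mapping.single k 1) 1"

definition Const :: "rat \<Rightarrow> mpoly" where
  "Const c = Poly_Mapping.single 0 c"

definition ffact_var :: "nat \<Rightarrow> nat \<Rightarrow> mpoly" where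
  "ffact_var k n = (\<Prod>i<n. Var k - of_nat i)"

definition down :: "mpoly \<Rightarrow> mpoly" where
  "down p = (\<Sum>c\<in>Poly_Mapping.keys p. Const (Poly_Mapping.lookup p c) *
              (\<Prod>k\<in>Poly_Mapping.keys c. ffact_var k (Poly_Mapping.lookup c k)))"

definition occurring_vars :: "mpoly \<Rightarrow> nat set" where
  "occurring_vars p = (\<Union>c\<in>Poly_Mapping.keys p. Poly_Mapping.keys c)"

definition charpoly :: "nat list \<Rightarrow> mpoly" where
  "charpoly mu = down (\<Sum>alpha\<in>partitions_of (sum_list mu).
      Const (of_int (chi mu alpha) / of_nat (zee alpha)) *
      prod_list (map (\<lambda>k. of_nat k * Var k - 1) alpha))"

end

theory Submission
  imports Defs "HOL-Library.Multiset"
begin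
definition dle :: "(nat \<Rightarrow>\<^sub>0 nat) \<Rightarrow> (nat \<Rightarrow>\<^sub>0 nat) \<Rightarrow> bool" where
  "dle d e \<longleftrightarrow> (\<forall>k. Poly_Mapping.lookup d k \<le> Poly_Mapping.lookup e k)"

definition bnd :: "mpoly \<Rightarrow> (nat \<Rightarrow>\<^sub>0 nat) \<Rightarrow> bool" where
  "bnd p a \<longleftrightarrow> (\<forall>d\<in>Poly_Mapping.keys p. dle d a)"

lemma lookup_mult_fin:
  fixes f g :: mpoly
  shows "Poly_Mapping.lookup (f * g) k = (\<Sum>(x,y)\<in>Poly_Mapping.keys f \<times> Poly_Mapping.keys g. if k = x + y then Poly_Mapping.lookup f x * Poly_Mapping.lookup g y else 0)"
proof -
  have "Poly_Mapping.lookup (f * g) k = (\<Sum>l. Poly_Mapping.lookup f l * (\<Sum>q. Poly_Mapping.lookup g q when k = l + q))"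
    by (rule lookup_mult)
  also have "\<dots> = (\<Sum>l\<in>Poly_Mapping.keys f. Poly_Mapping.lookup f l * (\<Sum>q\<in>Poly_Mapping.keys g. Poly_Mapping.lookup g q when k = l + q))"
  proof -
    have i: "(\<Sum>q. Poly_Mapping.lookup g q when k = l + q) = (\<Sum>q\<in>Poly_Mapping.keys g. Poly_Mapping.lookup g q when k = l + q)" for l
      by (rule Sum_any.expand_superset) (auto simp: in_keys_iff)
    show ?thesis unfolding i
      by (rule Sum_any.expand_superset) (auto simp: in_keys_iff)
  qed
  also have "\<dots> = (\<Sum>x\<in>Poly_Mapping.keys f. \<Sum>y\<in>Poly_Mapping.keys g. if k = x + y then Poly_Mapping.lookup f x * Poly_Mapping.lookup g y else 0)"
    by (auto intro!: sum.cong simp: sum_distrib_left when_def)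
  also have "\<dots> = (\<Sum>(x,y)\<in>Poly_Mapping.keys f \<times> Poly_Mapping.keys g. if k = x + y then Poly_Mapping.lookup f x * Poly_Mapping.lookup g y else 0)"
    by (simp add: sum.cartesian_product)
  finally show ?thesis .
qed

lemma dle_refl[simp]: "dle a a" by (simp add: dle_def)
lemma dle_trans: "dle a b \<Longrightarrow> dle b c \<Longrightarrow> dle a c"
  unfolding dle_def using le_trans by blast
lemma dle_zero[simp]: "dle 0 a" by (simp add: dle_def)
lemma dle_add: "dle a b \<Longrightarrow> dle c d \<Longrightarrow> dle (a + c) (b + d)"
  by (simp add: dle_def lookup_add add_mono)

lemma top_mult:
  fixes f g :: mpoly
  assumes "bnd f a" "bnd g b"
  shows "bnd (f * g) (a + b) \<and> Poly_Mapping.lookup (f * g) (a + b) = Poly_Mapping.lookup f a * Poly_Mapping.lookup g b"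
proof
  show "bnd (f * g) (a + b)"
    unfolding bnd_def
  proof
    fix d assume "d \<in> Poly_Mapping.keys (f * g)"
    then obtain x y where "d = x + y" "x \<in> Poly_Mapping.keys f" "y \<in> Poly_Mapping.keys g"
      using keys_mult by blast
    then show "dle d (a + b)" using assms by (auto simp: bnd_def intro: dle_add)
  qed
next
  have eq: "x = a \<and> y = b" if "x \<in> Poly_Mapping.keys f" "y \<in> Poly_Mapping.keys g" "a + b = x + y" for x y
  proof -
    have "dle x a" "dle y b" using that assms by (auto simp: bnd_def)
    have "Poly_Mapping.lookup x k = Poly_Mapping.lookup a k \<and> Poly_Mapping.lookup y k = Poly_Mapping.lookup b k" for k
    proof -
      have "Poly_Mapping.lookup (a + b) k = Poly_Mapping.lookup (x + y) k" using that(3) by simp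
      then have "Poly_Mapping.lookup a k + Poly_Mapping.lookup b k = Poly_Mapping.lookup x k + Poly_Mapping.lookup y k"
        by (simp add: lookup_add)
      moreover have "Poly_Mapping.lookup x k \<le> Poly_Mapping.lookup a k" "Poly_Mapping.lookup y k \<le> Poly_Mapping.lookup b k"
        using \<open>dle x a\<close> \<open>dle y b\<close> by (auto simp: dle_def)
      ultimately show ?thesis by linarith
    qed
    then show ?thesis by (simp add: poly_mapping_eqI)
  qed
  have "Poly_Mapping.lookup (f * g) (a + b) = (\<Sum>(x,y)\<in>Poly_Mapping.keys f \<times> Poly_Mapping.keys g. if (x,y) = (a,b) then Poly_Mapping.lookup f x * Poly_Mapping.lookup g y else 0)"
    unfolding lookup_mult_fin
    by (rule sum.cong) (use eq in auto)
  also have "\<dots> = (\<Sum>p\<in>Poly_Mapping.keys f \<times> Poly_Mapping.keys g. if p = (a,b) then Poly_Mapping.lookup f (fst p) * Poly_Mapping.lookup g (snd p) else 0)"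
    by (rule sum.cong) (auto split: if_splits)
  also have "\<dots> = Poly_Mapping.lookup f a * Poly_Mapping.lookup g b"
    by (simp add: sum.delta_remove in_keys_iff)
  finally show "Poly_Mapping.lookup (f * g) (a + b) = Poly_Mapping.lookup f a * Poly_Mapping.lookup g b" .
qed

lemma top_one: "bnd 1 0 \<and> Poly_Mapping.lookup (1::mpoly) 0 = 1"
  by (simp add: bnd_def)

lemma top_prod:
  fixes F :: "'i \<Rightarrow> mpoly"
  assumes "finite I" "\<And>i. i \<in> I \<Longrightarrow> bnd (F i) (A i)"
  shows "bnd (\<Prod>i\<in>I. F i) (\<Sum>i\<in>I. A i) \<and> Poly_Mapping.lookup (\<Prod>i\<in>I. F i) (\<Sum>i\<in>I. A i) = (\<Prod>i\<in>I. Poly_Mapping.lookup (F i) (A i))"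
  using assms
proof (induction I rule: finite_induct)
  case empty then show ?case by (simp add: top_one)
next
  case (insert x F')
  then show ?case using top_mult[of "F x" "A x"] by simp
qed

lemma top_prod_list:
  fixes F :: "'i \<Rightarrow> mpoly"
  assumes "\<And>i. i \<in> set xs \<Longrightarrow> bnd (F i) (A i)"
  shows "bnd (prod_list (map F xs)) (sum_list (map A xs)) \<and>
     Poly_Mapping.lookup (prod_list (map F xs)) (sum_list (map A xs)) = prod_list (map (\<lambda>i. Poly_Mapping.lookup (F i) (A i)) xs)"
  using assms
proof (induction xs)
  case Nil then show ?case by (simp add: top_one)
next
  case (Cons x xs)
  then show ?case using top_mult[of "F x" "A x"] by simp
qed

lemma single_nonzero: "Poly_Mapping.single k (1::nat) \<noteq> 0"
  by (metis lookup_single_eq lookup_zero one_neq_zero)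

lemma top_var_minus:
  "bnd (Var k - of_nat i) (Poly_Mapping.single k 1) \<and> Poly_Mapping.lookup (Var k - of_nat i) (Poly_Mapping.single k 1) = 1"
proof -
  have "Poly_Mapping.keys (Var k - of_nat i) \<subseteq> {Poly_Mapping.single k 1, 0}"
    by (auto simp: in_keys_iff lookup_minus Var_def lookup_of_nat lookup_single when_def split: if_splits)
  then show ?thesis
    using single_nonzero[of k]
    by (auto simp: bnd_def lookup_minus Var_def lookup_of_nat when_def)
qed

lemma top_kvar:
  "bnd (of_nat k * Var k - 1) (Poly_Mapping.single k 1) \<and> Poly_Mapping.lookup (of_nat k * Var k - 1) (Poly_Mapping.single k 1) = of_nat k"
proof -
  have e: "(of_nat k * Var k :: mpoly) = Poly_Mapping.single (Poly_Mapping.single k 1) (of_nat k)"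
    unfolding Var_def by (simp flip: single_of_nat add: mult_single)
  have "Poly_Mapping.keys (of_nat k * Var k - 1 :: mpoly) \<subseteq> {Poly_Mapping.single k 1, 0}"
    unfolding e by (auto simp: in_keys_iff lookup_minus lookup_one lookup_single when_def split: if_splits)
  then show ?thesis
    using single_nonzero[of k] unfolding e
    by (auto simp: bnd_def lookup_minus lookup_one when_def)
qed

definition mon :: "nat list \<Rightarrow> (nat \<Rightarrow>\<^sub>0 nat)" where
  "mon xs = sum_list (map (\<lambda>k. Poly_Mapping.single k 1) xs)"

definition T :: "nat list \<Rightarrow> mpoly" where
  "T xs = prod_list (map (\<lambda>k. of_nat k * Var k - 1) xs)"

definition FF :: "(nat \<Rightarrow>\<^sub>0 nat) \<Rightarrow> mpoly" where
  "FF c = (\<Prod>k\<in>Poly_Mapping.keys c. ffact_var k (Poly_Mapping.lookup c k))"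

lemma lookup_mon: "Poly_Mapping.lookup (mon xs) j = count_list xs j"
  by (induction xs) (auto simp: mon_def lookup_add lookup_single)

lemma keys_mon: "Poly_Mapping.keys (mon xs) = set xs"
  by (auto simp: in_keys_iff lookup_mon count_list_0_iff)

lemma top_T: "bnd (T xs) (mon xs) \<and> Poly_Mapping.lookup (T xs) (mon xs) = of_nat (prod_list xs)"
proof -
  have "bnd (T xs) (mon xs) \<and> Poly_Mapping.lookup (T xs) (mon xs) = prod_list (map (\<lambda>k. (of_nat k::rat)) xs)"
    unfolding T_def mon_def using top_prod_list[of xs "\<lambda>k. of_nat k * Var k - 1" "\<lambda>k. Poly_Mapping.single k 1"] top_kvar
    by simp
  moreover have "prod_list (map (\<lambda>k. (of_nat k::rat)) xs) = of_nat (prod_list xs)"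
    by (induction xs) auto
  ultimately show ?thesis by simp
qed

lemma sum_single_lt: "(\<Sum>i<n. Poly_Mapping.single k (1::nat)) = Poly_Mapping.single k n"
  by (induction n) (auto simp: single_add[symmetric])

lemma top_ffact: "bnd (ffact_var k n) (Poly_Mapping.single k n) \<and> Poly_Mapping.lookup (ffact_var k n) (Poly_Mapping.single k n) = 1"
  using top_prod[of "{..<n}" "\<lambda>i. Var k - of_nat i" "\<lambda>i. Poly_Mapping.single k 1"] top_var_minus
  unfolding ffact_var_def sum_single_lt by simp

lemma sum_single_keys: "(\<Sum>k\<in>Poly_Mapping.keys c. Poly_Mapping.single k (Poly_Mapping.lookup c k)) = c"
proof (rule poly_mapping_eqI)
  fix j
  show "Poly_Mapping.lookup (\<Sum>k\<in>Poly_Mapping.keys c. Poly_Mapping.single k (Poly_Mapping.lookup c k)) j = Poly_Mapping.lookup c j"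
    by (simp add: lookup_sum lookup_single when_def sum.delta in_keys_iff)
qed

lemma top_FF: "bnd (FF c) c \<and> Poly_Mapping.lookup (FF c) c = 1"
  using top_prod[of "Poly_Mapping.keys c" "\<lambda>k. ffact_var k (Poly_Mapping.lookup c k)"
      "\<lambda>k. Poly_Mapping.single k (Poly_Mapping.lookup c k)"] top_ffact
  unfolding FF_def sum_single_keys by simp

lemma lookup_Const_mult: "Poly_Mapping.lookup (Const c * p) x = c * Poly_Mapping.lookup p x"
  unfolding Const_def mult_map_scale_conv_mult[symmetric]
  by (simp add: map.rep_eq when_def)

lemma keys_Const_mult: "Poly_Mapping.keys (Const c * p) \<subseteq> Poly_Mapping.keys p"
  by (auto simp: in_keys_iff lookup_Const_mult)

lemma lookup_down: "Poly_Mapping.lookup (down P) M = (\<Sum>c\<in>Poly_Mapping.keys P. Poly_Mapping.lookup P c * Poly_Mapping.lookup (FF c) M)"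
  unfolding down_def FF_def by (simp add: lookup_sum lookup_Const_mult)

lemma keys_down: "Poly_Mapping.keys (down P) \<subseteq> (\<Union>c\<in>Poly_Mapping.keys P. Poly_Mapping.keys (FF c))"
  unfolding down_def FF_def using keys_sum keys_Const_mult by fastforce

definition W :: "(nat \<Rightarrow>\<^sub>0 nat) \<Rightarrow> nat" where
  "W d = (\<Sum>k\<in>Poly_Mapping.keys d. k * Poly_Mapping.lookup d k)"

lemma dle_keys: "dle d e \<Longrightarrow> Poly_Mapping.keys d \<subseteq> Poly_Mapping.keys e"
proof
  fix k assume "dle d e" "k \<in> Poly_Mapping.keys d"
  then have "Poly_Mapping.lookup d k \<le> Poly_Mapping.lookup e k" "Poly_Mapping.lookup d k \<noteq> 0"
    by (auto simp: dle_def in_keys_iff)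
  then show "k \<in> Poly_Mapping.keys e" by (simp add: in_keys_iff)
qed

lemma W_alt: "dle d e \<Longrightarrow> W d = (\<Sum>k\<in>Poly_Mapping.keys e. k * Poly_Mapping.lookup d k)"
  unfolding W_def
  by (rule sum.mono_neutral_left) (auto simp: dle_keys in_keys_iff)

lemma W_mono: assumes "dle d e" shows "W d \<le> W e"
proof -
  have "(\<Sum>k\<in>Poly_Mapping.keys e. k * Poly_Mapping.lookup d k) \<le> (\<Sum>k\<in>Poly_Mapping.keys e. k * Poly_Mapping.lookup e k)"
    by (rule sum_mono) (use assms in \<open>simp add: dle_def\<close>)
  then show ?thesis using W_alt[OF assms] by (simp add: W_def)
qed

lemma W_strict:
  assumes "dle d e" "d \<noteq> e" "0 \<notin> Poly_Mapping.keys e"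
  shows "W d < W e"
proof -
  have "\<exists>j. Poly_Mapping.lookup d j \<noteq> Poly_Mapping.lookup e j"
  proof (rule ccontr)
    assume "\<not> ?thesis"
    then have "d = e" by (intro poly_mapping_eqI) auto
    with assms(2) show False by simp
  qed
  then obtain j where j: "Poly_Mapping.lookup d j \<noteq> Poly_Mapping.lookup e j" by blast
  have le: "Poly_Mapping.lookup d k \<le> Poly_Mapping.lookup e k" for k using assms(1) by (simp add: dle_def)
  have jl: "Poly_Mapping.lookup d j < Poly_Mapping.lookup e j"
    using le[of j] j by simp
  then have jk: "j \<in> Poly_Mapping.keys e" by (simp add: in_keys_iff)
  have "j \<noteq> 0" proof assume "j = 0" with jk assms(3) show False by simp qed
  have "(\<Sum>k\<in>Poly_Mapping.keys e. k * Poly_Mapping.lookup d k) < (\<Sum>k\<in>Poly_Mapping.keys e. k * Poly_Mapping.lookup e k)"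
  proof (rule sum_strict_mono_ex1)
    show "finite (Poly_Mapping.keys e)" by simp
    show "\<forall>x\<in>Poly_Mapping.keys e. x * Poly_Mapping.lookup d x \<le> x * Poly_Mapping.lookup e x"
      using le by (simp add: mult_le_mono2)
    show "\<exists>a\<in>Poly_Mapping.keys e. a * Poly_Mapping.lookup d a < a * Poly_Mapping.lookup e a"
      using jk jl \<open>j \<noteq> 0\<close> by auto
  qed
  then show ?thesis using W_alt[OF assms(1)] W_def by simp
qed

lemma W_mon: "W (mon xs) = sum_list xs"
  unfolding W_def keys_mon lookup_mon
  using sum_list_map_eq_sum_count[of "\<lambda>x. x" xs] by (simp add: mult.commute)

lemma mon_inj:
  assumes "is_partition a" "is_partition b" "mon a = mon b"
  shows "a = b"
proof -
  have "count_list a = count_list b"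
  proof
    fix j
    have "Poly_Mapping.lookup (mon a) j = Poly_Mapping.lookup (mon b) j" using assms(3) by simp
    then show "count_list a j = count_list b j" by (simp add: lookup_mon)
  qed
  then have m: "mset (rev a) = mset (rev b)"
    by (simp add: multiset_eq_iff count_mset)
  have sa: "sorted (rev a)" "sorted (rev b)" using assms(1,2)
    unfolding is_partition_def sorted_wrt_rev by simp_all
  have "sort (rev a) = rev b" using properties_for_sort[OF m[symmetric] sa(2)] .
  moreover have "sort (rev a) = rev a" using sa(1) by (rule sorted_sort_id)
  ultimately show ?thesis by simp
qed

lemma key_lemma:
  assumes a0: "is_partition a0" and a: "is_partition a" and s: "sum_list a = sum_list a0"
    and d1: "dle (mon a0) c" and d2: "dle c (mon a)"
  shows "c = mon a0 \<and> a = a0"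
proof -
  have z: "0 \<notin> Poly_Mapping.keys (mon a)" using a unfolding keys_mon is_partition_def by simp
  have zc: "0 \<notin> Poly_Mapping.keys c"
  proof
    assume "0 \<in> Poly_Mapping.keys c"
    then have "0 \<in> Poly_Mapping.keys (mon a)" by (rule subsetD[OF dle_keys[OF d2]])
    with z show False by contradiction
  qed
  have w1: "W (mon a0) \<le> W c" "W c \<le> W (mon a)" using W_mono[OF d1] W_mono[OF d2] by auto
  have w2: "W (mon a0) = W (mon a)" using s by (simp add: W_mon)
  have "c = mon a"
  proof (rule ccontr)
    assume "c \<noteq> mon a"
    then have "W c < W (mon a)" by (rule W_strict[OF d2 _ z])
    with w1 w2 show False by linarith
  qed
  moreover have "mon a0 = c"
  proof (rule ccontr)
    assume "mon a0 \<noteq> c"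
    then have "W (mon a0) < W c" by (rule W_strict[OF d1 _ zc])
    with w1 w2 show False by linarith
  qed
  ultimately have "mon a = mon a0" by simp
  then have "a = a0" by (rule mon_inj[OF a a0])
  with \<open>mon a0 = c\<close> show ?thesis by simp
qed

lemma sum_ge_triangle:
  "finite B \<Longrightarrow> (\<Sum>i<card B. i) \<le> \<Sum> (B::nat set)"
proof (induction "card B" arbitrary: B)
  case 0 then show ?case by simp
next
  case (Suc n)
  then have ne: "B \<noteq> {}" by auto
  define M where "M = Max B"
  have MB: "M \<in> B" using Suc.prems ne by (simp add: M_def)
  have cB': "card (B - {M}) = n" using Suc.hyps(2) MB Suc.prems by simp
  have IH: "(\<Sum>i<n. i) \<le> \<Sum> (B - {M})" using Suc.hyps(1)[of "B - {M}"] cB' Suc.prems by simp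
  have "B \<subseteq> {0..M}" using Suc.prems by (auto simp: M_def)
  then have "card B \<le> card {0..M}" by (rule card_mono[rotated]) simp
  then have "n \<le> M" using Suc.hyps(2) by simp
  have "\<Sum> B = M + \<Sum> (B - {M})" using Suc.prems MB by (simp add: sum.remove)
  then show ?case using IH \<open>n \<le> M\<close> Suc.hyps(2)[symmetric] by simp
qed

lemma exists_move:
  assumes "finite (B::nat set)" "B \<noteq> {0..<card B}"
  shows "\<exists>b\<in>B. 1 \<le> b \<and> b - 1 \<notin> B"
proof -
  have "\<exists>j. j \<notin> B" using assms(1) infinite_UNIV_nat by (metis UNIV_eq_I)
  define j where "j = (LEAST j. j \<notin> B)"
  have jB: "j \<notin> B" unfolding j_def by (rule LeastI_ex) fact
  have below: "i \<in> B" if "i < j" for i using that not_less_Least unfolding j_def by blast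
  show ?thesis
  proof (cases "\<exists>b\<in>B. j < b")
    case False
    have "B \<subseteq> {0..<j}"
    proof
      fix x assume "x \<in> B"
      then have "x \<le> j" "x \<noteq> j" using False jB by auto
      then show "x \<in> {0..<j}" by simp
    qed
    moreover have "{0..<j} \<subseteq> B" using below by auto
    ultimately have "B = {0..<j}" by auto
    then have "B = {0..<card B}" by simp
    with assms(2) show ?thesis by simp
  next
    case True
    define b where "b = (LEAST b. b \<in> B \<and> j < b)"
    have bB: "b \<in> B \<and> j < b" unfolding b_def by (rule LeastI_ex) (use True in blast)
    have "b - 1 \<notin> B"
    proof
      assume "b - 1 \<in> B"
      moreover have "b - 1 \<noteq> j" using jB \<open>b - 1 \<in> B\<close> by auto
      ultimately have "b - 1 \<in> B \<and> j < b - 1" using bB by auto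
      then have "b \<le> b - 1" unfolding b_def by (rule Least_le)
      then show False using bB by (cases b) auto
    qed
    then show ?thesis using bB by force
  qed
qed

lemma card_between_empty: "{c\<in>B. b - Suc 0 < c \<and> c < (b::nat)} = {}"
  by auto

lemma mn_ones_nonneg: "0 \<le> mn B (replicate r 1)"
proof (induction r arbitrary: B)
  case 0 then show ?case by simp
next
  case (Suc r)
  show ?case by (simp, rule sum_nonneg) (use Suc.IH in \<open>simp add: card_between_empty\<close>)
qed

lemma mn_ones_pos:
  "finite B \<Longrightarrow> \<Sum> B = r + (\<Sum>i<card B. i) \<Longrightarrow> 0 < mn B (replicate r 1)"
proof (induction r arbitrary: B)
  case 0
  have "B = {0..<card B}"
  proof (rule ccontr)
    assume "B \<noteq> {0..<card B}"
    then obtain b where b: "b \<in> B" "1 \<le> b" "b - 1 \<notin> B" using exists_move 0 by blast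
    define B' where "B' = insert (b - 1) (B - {b})"
    have fin: "finite B'" using 0 by (simp add: B'_def)
    have "card B > 0" using b 0 by (auto simp: card_gt_0_iff)
    then have cB: "card B' = card B" using b 0 by (simp add: B'_def)
    have "\<Sum> B = b + \<Sum> (B - {b})" using b 0 by (simp add: sum.remove)
    moreover have "\<Sum> B' = (b - 1) + \<Sum> (B - {b})" using b 0 by (simp add: B'_def)
    ultimately have "\<Sum> B' < \<Sum> B" using b by simp
    moreover have "(\<Sum>i<card B'. i) \<le> \<Sum> B'" using sum_ge_triangle[OF fin] .
    ultimately show False using 0 cB by simp
  qed
  then show ?case by simp
next
  case (Suc r)
  have "B \<noteq> {0..<card B}"
  proof
    assume "B = {0..<card B}"
    then have "\<Sum> B = (\<Sum>i<card B. i)" by (metis atLeast0LessThan)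
    with Suc.prems show False by simp
  qed
  then obtain b where b: "b \<in> B" "1 \<le> b" "b - 1 \<notin> B" using exists_move Suc.prems by blast
  define B' where "B' = insert (b - 1) (B - {b})"
  have fin: "finite B'" using Suc.prems by (simp add: B'_def)
  have "card B > 0" using b Suc.prems by (auto simp: card_gt_0_iff)
  then have cB: "card B' = card B" using b Suc.prems by (simp add: B'_def)
  have "\<Sum> B = b + \<Sum> (B - {b})" using b Suc.prems by (simp add: sum.remove)
  moreover have "\<Sum> B' = (b - 1) + \<Sum> (B - {b})" using b Suc.prems by (simp add: B'_def)
  ultimately have "\<Sum> B' = r + (\<Sum>i<card B'. i)" using b Suc.prems cB by simp
  then have pos: "0 < mn B' (replicate r 1)" using Suc.IH fin by blast
  let ?S = "{b\<in>B. 1 \<le> b \<and> b - 1 \<notin> B}"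
  have fS: "finite ?S" using Suc.prems by simp
  have "mn B (replicate (Suc r) 1) = (\<Sum>b\<in>?S. mn (insert (b - 1) (B - {b})) (replicate r 1))"
    by (simp add: card_between_empty)
  also have "\<dots> \<ge> mn (insert (b - 1) (B - {b})) (replicate r 1)"
    by (rule member_le_sum) (use b fS mn_ones_nonneg in auto)
  finally show ?case using pos B'_def by simp
qed

definition bf :: "nat list \<Rightarrow> nat \<Rightarrow> nat" where
  "bf mu i = mu!i + (length mu - 1 - i)"

lemma beta_image: "beta_set mu = bf mu ` {..<length mu}"
  unfolding beta_set_def bf_def image_def by blast

lemma part_nth_mono:
  assumes "is_partition mu" "i < length mu" "j \<le> i"
  shows "mu!i \<le> mu!j"
proof (cases "j = i")
  case True then show ?thesis by simp
next
  case False
  then have "j < i" using assms(3) by simp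
  then show ?thesis using assms(1,2) sorted_wrt_nth_less[of "\<lambda>a b. b \<le> a" mu j i]
    unfolding is_partition_def by simp
qed

lemma part_nth_pos:
  assumes "is_partition mu" "i < length mu"
  shows "1 \<le> mu!i"
proof -
  have "mu!i \<in> set mu" using assms(2) by (rule nth_mem)
  then have "mu!i \<noteq> 0" using assms(1) unfolding is_partition_def by metis
  then show ?thesis by simp
qed

lemma beta_le:
  assumes "is_partition mu" "b \<in> beta_set mu"
  shows "b \<le> hd mu + length mu - 1"
proof -
  obtain i where i: "i < length mu" "b = bf mu i" using assms(2) unfolding beta_image by blast
  have ne: "mu \<noteq> []" using i by auto
  have "mu!i \<le> mu!0" using part_nth_mono[OF assms(1) i(1)] by simp
  moreover have "hd mu = mu!0" using ne by (simp add: hd_conv_nth)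
  ultimately show ?thesis using i unfolding bf_def by simp
qed

lemma h_in_beta:
  assumes "mu \<noteq> []"
  shows "hd mu + length mu - 1 \<in> beta_set mu"
proof -
  have l: "length mu > 0" using assms by simp
  obtain x xs where mu: "mu = x # xs" using assms by (cases mu) auto
  have "hd mu + length mu - 1 = bf mu 0" unfolding bf_def mu by simp
  then show ?thesis unfolding beta_image using l by simp
qed

lemma zero_notin_beta:
  assumes "is_partition mu"
  shows "0 \<notin> beta_set mu"
proof
  assume "0 \<in> beta_set mu"
  then obtain i where i: "i < length mu" "0 = bf mu i" unfolding beta_image by blast
  have "1 \<le> mu!i" by (rule part_nth_pos[OF assms i(1)])
  then show False using i(2) unfolding bf_def by simp
qed

lemma beta_inj: assumes "is_partition mu"
  shows "inj_on (bf mu) {..<length mu}"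
proof (rule inj_onI)
  fix i j assume ij: "i \<in> {..<length mu}" "j \<in> {..<length mu}" "bf mu i = bf mu j"
  show "i = j"
  proof (rule ccontr)
    assume "i \<noteq> j"
    then consider "i < j" | "j < i" by linarith
    then show False
    proof cases
      case 1
      then have "mu!j \<le> mu!i" using part_nth_mono[OF assms, of j i] ij by simp
      then show False using ij 1 unfolding bf_def by simp
    next
      case 2
      then have "mu!i \<le> mu!j" using part_nth_mono[OF assms, of i j] ij by simp
      then show False using ij 2 unfolding bf_def by simp
    qed
  qed
qed

lemma beta_card: "is_partition mu \<Longrightarrow> card (beta_set mu) = length mu"
  unfolding beta_image by (simp add: card_image beta_inj)

lemma beta_sum: assumes "is_partition mu"
  shows "\<Sum> (beta_set mu) = sum_list mu + (\<Sum>i<length mu. i)"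
proof -
  have "\<Sum> (beta_set mu) = (\<Sum>i<length mu. bf mu i)"
    unfolding beta_image by (simp add: sum.reindex beta_inj[OF assms])
  also have "\<dots> = (\<Sum>i<length mu. mu!i + (length mu - Suc i))"
    unfolding bf_def by simp
  also have "\<dots> = (\<Sum>i<length mu. mu!i) + (\<Sum>i<length mu. length mu - Suc i)"
    by (rule sum.distrib)
  also have "(\<Sum>i<length mu. length mu - Suc i) = (\<Sum>i<length mu. i)"
    using sum.nat_diff_reindex[of "\<lambda>i. i" "length mu"] by simp
  also have "(\<Sum>i<length mu. mu!i) = sum_list mu"
    by (simp add: sum_list_sum_nth atLeast0LessThan)
  finally show ?thesis .
qed

lemma chi_zero:
  assumes "is_partition mu" "hd mu + length mu - 1 < k"
  shows "chi mu (k # ks) = 0"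
proof -
  have e: "{b \<in> beta_set mu. k \<le> b \<and> b - k \<notin> beta_set mu} = {}"
  proof (rule equals0I)
    fix b assume "b \<in> {b \<in> beta_set mu. k \<le> b \<and> b - k \<notin> beta_set mu}"
    then have "b \<in> beta_set mu" "k \<le> b" by auto
    then show False using beta_le[OF assms(1)] assms(2) by fastforce
  qed
  show ?thesis unfolding chi_def mn.simps e sum.empty by (rule refl)
qed

lemma sum_list_ge_length: "\<forall>x\<in>set xs. 1 \<le> x \<Longrightarrow> length xs \<le> sum_list (xs::nat list)"
  by (induction xs) auto

lemma h_le_m:
  assumes "is_partition mu" "mu \<noteq> []"
  shows "hd mu + length mu - 1 \<le> sum_list mu"
proof -
  obtain x xs where mu: "mu = x # xs" using assms(2) by (cases mu) auto
  have "\<forall>y\<in>set xs. 1 \<le> y"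
  proof
    fix y assume "y \<in> set xs"
    then have "y \<in> set mu" using mu by simp
    then have "y \<noteq> 0" using assms(1) unfolding is_partition_def by metis
    then show "1 \<le> y" by simp
  qed
  then show ?thesis using sum_list_ge_length[of xs] mu by simp
qed

lemma chi_hook:
  assumes P: "is_partition mu" and ne: "mu \<noteq> []"
  defines "h \<equiv> hd mu + length mu - 1"
  shows "chi mu (h # replicate (sum_list mu - h) 1) \<noteq> 0"
proof -
  let ?B = "beta_set mu"
  let ?r = "sum_list mu - h"
  have hB: "h \<in> ?B" using h_in_beta[OF ne] h_def by simp
  have z: "0 \<notin> ?B" by (rule zero_notin_beta[OF P])
  have fin: "finite ?B" by (simp add: beta_image)
  have S: "{b \<in> ?B. h \<le> b \<and> b - h \<notin> ?B} = {h}"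
  proof
    show "{h} \<subseteq> {b \<in> ?B. h \<le> b \<and> b - h \<notin> ?B}" using hB z by simp
    show "{b \<in> ?B. h \<le> b \<and> b - h \<notin> ?B} \<subseteq> {h}"
    proof
      fix b assume "b \<in> {b \<in> ?B. h \<le> b \<and> b - h \<notin> ?B}"
      then have "b \<in> ?B" "h \<le> b" by auto
      then have "b = h" using beta_le[OF P, of b] h_def by simp
      then show "b \<in> {h}" by simp
    qed
  qed
  define B' where "B' = insert 0 (?B - {h})"
  have finB': "finite B'" using fin by (simp add: B'_def)
  have "card ?B > 0" using hB fin by (auto simp: card_gt_0_iff)
  then have cB': "card B' = length mu" using z hB fin beta_card[OF P] by (simp add: B'_def)
  have "\<Sum> ?B = h + \<Sum> (?B - {h})" using fin hB by (simp add: sum.remove)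
  moreover have "\<Sum> B' = \<Sum> (?B - {h})" using fin by (simp add: B'_def sum.insert_if)
  moreover have "h \<le> sum_list mu" using h_le_m[OF P ne] h_def by simp
  ultimately have "\<Sum> B' = ?r + (\<Sum>i<card B'. i)" using beta_sum[OF P] cB' by simp
  then have pos: "0 < mn B' (replicate ?r 1)" using mn_ones_pos finB' by blast
  have "chi mu (h # replicate ?r 1) = (\<Sum>b\<in>{h}. (-1) ^ card {c\<in>?B. b - h < c \<and> c < b} * mn (insert (b - h) (?B - {b})) (replicate ?r 1))"
    unfolding chi_def mn.simps S by (rule refl)
  also have "\<dots> = (-1) ^ card {c\<in>?B. h - h < c \<and> c < h} * mn B' (replicate ?r 1)"
    by (simp add: B'_def)
  finally show ?thesis using pos by simp
qed

lemma finite_partitions: "finite (partitions_of m)"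
proof (rule finite_subset)
  show "partitions_of m \<subseteq> {xs. set xs \<subseteq> {0..m} \<and> length xs \<le> m}"
  proof
    fix xs assume "xs \<in> partitions_of m"
    then have P: "is_partition xs" "sum_list xs = m" by (auto simp: partitions_of_def)
    have "\<forall>x\<in>set xs. 1 \<le> x"
    proof
      fix x assume "x \<in> set xs"
      then have "x \<noteq> 0" using P(1) unfolding is_partition_def by metis
      then show "1 \<le> x" by simp
    qed
    then have "length xs \<le> m" using sum_list_ge_length P(2) by metis
    moreover have "set xs \<subseteq> {0..m}" using P(2) member_le_sum_list[of _ xs] by fastforce
    ultimately show "xs \<in> {xs. set xs \<subseteq> {0..m} \<and> length xs \<le> m}" by simp
  qed
  show "finite {xs. set xs \<subseteq> {0..m} \<and> length xs \<le> m}"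
    by (rule finite_lists_length_le) simp
qed

definition coef :: "nat list \<Rightarrow> nat list \<Rightarrow> rat" where
  "coef mu alpha = of_int (chi mu alpha) / of_nat (zee alpha)"

definition PP :: "nat list \<Rightarrow> mpoly" where
  "PP mu = (\<Sum>alpha\<in>partitions_of (sum_list mu). Const (coef mu alpha) * T alpha)"

lemma charpoly_PP: "charpoly mu = down (PP mu)"
  unfolding charpoly_def PP_def coef_def T_def by simp

lemma keys_PP:
  assumes "c \<in> Poly_Mapping.keys (PP mu)"
  shows "\<exists>alpha\<in>partitions_of (sum_list mu). coef mu alpha \<noteq> 0 \<and> c \<in> Poly_Mapping.keys (T alpha)"
proof -
  obtain alpha where a: "alpha \<in> partitions_of (sum_list mu)" "c \<in> Poly_Mapping.keys (Const (coef mu alpha) * T alpha)"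
    using assms keys_sum[of "\<lambda>alpha. Const (coef mu alpha) * T alpha" "partitions_of (sum_list mu)"]
    unfolding PP_def by blast
  then have "coef mu alpha * Poly_Mapping.lookup (T alpha) c \<noteq> 0"
    by (simp add: in_keys_iff lookup_Const_mult)
  then show ?thesis using a(1) by (auto simp: in_keys_iff)
qed

lemma sorted_desc_le_hd:
  assumes "sorted_wrt (\<lambda>a b. b \<le> a) (k # ks)" "j \<in> set (k # ks)"
  shows "j \<le> (k::nat)"
  using assms by auto

lemma upper_bound:
  assumes P: "is_partition mu" and ne: "mu \<noteq> []"
    and j: "j \<in> occurring_vars (charpoly mu)"
  shows "j \<le> hd mu + length mu - 1"
proof -
  obtain d where d: "d \<in> Poly_Mapping.keys (down (PP mu))" "j \<in> Poly_Mapping.keys d"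
    using j unfolding occurring_vars_def charpoly_PP by blast
  obtain c where c: "c \<in> Poly_Mapping.keys (PP mu)" "d \<in> Poly_Mapping.keys (FF c)"
    using d(1) keys_down by blast
  have "dle d c" using top_FF[of c] c(2) unfolding bnd_def by blast
  then have jc: "j \<in> Poly_Mapping.keys c" using dle_keys d(2) by blast
  obtain alpha where a: "alpha \<in> partitions_of (sum_list mu)" "coef mu alpha \<noteq> 0" "c \<in> Poly_Mapping.keys (T alpha)"
    using keys_PP[OF c(1)] by blast
  have "dle c (mon alpha)" using top_T[of alpha] a(3) unfolding bnd_def by blast
  then have "j \<in> set alpha" using jc dle_keys keys_mon by blast
  then obtain k ks where alpha: "alpha = k # ks" by (cases alpha) auto
  have chi: "chi mu alpha \<noteq> 0" using a(2) unfolding coef_def by auto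
  have "k \<le> hd mu + length mu - 1"
  proof (rule ccontr)
    assume "\<not> ?thesis"
    then have "chi mu (k # ks) = 0" using chi_zero[OF P] by simp
    with chi alpha show False by simp
  qed
  moreover have "j \<le> k"
    using a(1) \<open>j \<in> set alpha\<close> alpha sorted_desc_le_hd[of k ks j]
    unfolding partitions_of_def is_partition_def by blast
  ultimately show ?thesis by simp
qed

lemma sorted_wrt_replicate_desc: "sorted_wrt (\<lambda>a b. b \<le> a) (replicate r (x::nat))"
  by (induction r) auto

lemma zee_pos: "0 \<notin> set alpha \<Longrightarrow> zee alpha \<noteq> 0"
  unfolding zee_def by (auto simp: fact_nonzero)

lemma lower_bound:
  assumes P: "is_partition mu" and ne: "mu \<noteq> []"
  defines "h \<equiv> hd mu + length mu - 1"
  shows "h \<in> occurring_vars (charpoly mu)"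
proof -
  let ?m = "sum_list mu"
  let ?A = "partitions_of ?m"
  define a0 where "a0 = h # replicate (?m - h) 1"
  define M where "M = mon a0"
  have "h \<noteq> 0" using h_in_beta[OF ne] zero_notin_beta[OF P] unfolding h_def by metis
  then have h1: "1 \<le> h" by simp
  have hm: "h \<le> ?m" using h_le_m[OF P ne] h_def by simp
  have Pa0: "is_partition a0"
    unfolding a0_def is_partition_def using h1 sorted_wrt_replicate_desc[of "?m - h" 1] by auto
  have a0A: "a0 \<in> ?A" unfolding partitions_of_def a0_def using Pa0 hm by (simp add: a0_def sum_list_replicate)
  have chi0: "chi mu a0 \<noteq> 0" unfolding a0_def h_def using chi_hook[OF P ne] by simp
  have z0: "zee a0 \<noteq> 0" using Pa0 zee_pos unfolding is_partition_def by blast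
  have coef0: "coef mu a0 \<noteq> 0" unfolding coef_def using chi0 z0 by simp
  have only: "alpha = a0" if "alpha \<in> ?A" "M \<in> Poly_Mapping.keys (T alpha)" for alpha
  proof -
    have "dle M (mon alpha)" using top_T[of alpha] that(2) unfolding bnd_def by blast
    moreover have "is_partition alpha" "sum_list alpha = ?m" using that(1) by (auto simp: partitions_of_def)
    moreover have "sum_list a0 = ?m" using a0A by (simp add: partitions_of_def)
    ultimately show ?thesis using key_lemma[OF Pa0, of alpha M] unfolding M_def by simp
  qed
  have "Poly_Mapping.lookup (PP mu) M = (\<Sum>alpha\<in>?A. coef mu alpha * Poly_Mapping.lookup (T alpha) M)"
    unfolding PP_def by (simp add: lookup_sum lookup_Const_mult)
  also have "\<dots> = coef mu a0 * Poly_Mapping.lookup (T a0) M"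
  proof (rule sum.remove[OF finite_partitions a0A, THEN trans])
    have "(\<Sum>alpha\<in>?A - {a0}. coef mu alpha * Poly_Mapping.lookup (T alpha) M) = 0"
    proof (rule sum.neutral, rule ballI)
      fix alpha assume "alpha \<in> ?A - {a0}"
      then have "M \<notin> Poly_Mapping.keys (T alpha)" using only by blast
      then show "coef mu alpha * Poly_Mapping.lookup (T alpha) M = 0" by (simp add: in_keys_iff)
    qed
    then show "coef mu a0 * Poly_Mapping.lookup (T a0) M + (\<Sum>alpha\<in>?A - {a0}. coef mu alpha * Poly_Mapping.lookup (T alpha) M) = coef mu a0 * Poly_Mapping.lookup (T a0) M"
      by simp
  qed
  also have "Poly_Mapping.lookup (T a0) M = of_nat h"
    using top_T[of a0] unfolding M_def a0_def by simp
  finally have PM: "Poly_Mapping.lookup (PP mu) M \<noteq> 0" using coef0 h1 by simp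
  then have MK: "M \<in> Poly_Mapping.keys (PP mu)" by (simp add: in_keys_iff)
  have only2: "c = M" if c_in: "c \<in> Poly_Mapping.keys (PP mu)" and M_in: "M \<in> Poly_Mapping.keys (FF c)" for c
  proof -
    obtain alpha where a: "alpha \<in> ?A" "c \<in> Poly_Mapping.keys (T alpha)"
      using keys_PP[OF c_in] by blast
    have "dle c (mon alpha)" using top_T[of alpha] a(2) unfolding bnd_def by blast
    moreover have "dle M c" using top_FF[of c] M_in unfolding bnd_def by blast
    moreover have "is_partition alpha" "sum_list alpha = ?m" using a(1) by (auto simp: partitions_of_def)
    moreover have "sum_list a0 = ?m" using a0A by (simp add: partitions_of_def)
    ultimately show ?thesis using key_lemma[OF Pa0, of alpha c] unfolding M_def by simp
  qed
  have "Poly_Mapping.lookup (down (PP mu)) M = (\<Sum>c\<in>Poly_Mapping.keys (PP mu). Poly_Mapping.lookup (PP mu) c * Poly_Mapping.lookup (FF c) M)"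
    by (rule lookup_down)
  also have "\<dots> = Poly_Mapping.lookup (PP mu) M * Poly_Mapping.lookup (FF M) M"
  proof (rule sum.remove[OF finite_keys MK, THEN trans])
    have "(\<Sum>c\<in>Poly_Mapping.keys (PP mu) - {M}. Poly_Mapping.lookup (PP mu) c * Poly_Mapping.lookup (FF c) M) = 0"
    proof (rule sum.neutral, rule ballI)
      fix c assume "c \<in> Poly_Mapping.keys (PP mu) - {M}"
      then have "M \<notin> Poly_Mapping.keys (FF c)" using only2 by blast
      then show "Poly_Mapping.lookup (PP mu) c * Poly_Mapping.lookup (FF c) M = 0" by (simp add: in_keys_iff)
    qed
    then show "Poly_Mapping.lookup (PP mu) M * Poly_Mapping.lookup (FF M) M + (\<Sum>c\<in>Poly_Mapping.keys (PP mu) - {M}. Poly_Mapping.lookup (PP mu) c * Poly_Mapping.lookup (FF c) M) = Poly_Mapping.lookup (PP mu) M * Poly_Mapping.lookup (FF M) M"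
      by simp
  qed
  also have "Poly_Mapping.lookup (FF M) M = 1" using top_FF by blast
  finally have "Poly_Mapping.lookup (down (PP mu)) M \<noteq> 0" using PM by simp
  then have "M \<in> Poly_Mapping.keys (down (PP mu))" by (simp add: in_keys_iff)
  moreover have "h \<in> Poly_Mapping.keys M" unfolding M_def a0_def by (simp add: keys_mon)
  ultimately show ?thesis unfolding occurring_vars_def charpoly_PP by blast
qed

lemma main_mu:
  assumes "is_partition mu" "mu \<noteq> []" "h = hd mu + length mu - 1"
  shows "h \<in> occurring_vars (charpoly mu) \<and> (\<forall>j\<in>occurring_vars (charpoly mu). j \<le> h)"
  using lower_bound[OF assms(1,2)] upper_bound[OF assms(1,2)] assms(3) by auto

lemma part_pos: "is_partition lam \<Longrightarrow> x \<in> set lam \<Longrightarrow> 1 \<le> x"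
proof -
  assume a: "is_partition lam" "x \<in> set lam"
  then have "x \<noteq> 0" unfolding is_partition_def by metis
  then show "1 \<le> x" by simp
qed

lemma conj_nth: "lam \<noteq> [] \<Longrightarrow> i < hd lam \<Longrightarrow> conjugate lam ! i = length (filter (\<lambda>x. Suc i \<le> x) lam)"
  unfolding conjugate_def by (simp del: upt_Suc add: nth_map_upt)

lemma first_case:
  assumes P: "is_partition lam" and pos: "hook lam 2 1 > 0"
  shows "is_partition (tl lam) \<and> tl lam \<noteq> [] \<and> hook lam 2 1 = hd (tl lam) + length (tl lam) - 1"
proof -
  have c: "2 \<le> length lam" "1 \<le> lam ! 1" using pos unfolding hook_def by (auto split: if_splits)
  have "filter (\<lambda>x. 1 \<le> x) lam = lam" using part_pos[OF P] by (simp add: filter_id_conv)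
  moreover have ne: "lam \<noteq> []" using c by auto
  moreover have "0 < hd lam" using part_pos[OF P, of "hd lam"] ne by simp
  ultimately have c0: "conjugate lam ! 0 = length lam" using conj_nth[of lam 0] by simp
  obtain x y ys where lam: "lam = x # y # ys" using c(1) by (cases lam; cases "tl lam") auto
  have h: "hook lam 2 1 = lam ! 1 + length lam - 2" using c c0 unfolding hook_def by simp
  have "is_partition (tl lam)" using P unfolding is_partition_def lam by auto
  then show ?thesis using h lam by simp
qed


lemma second_case:
  assumes P: "is_partition lam" and pos: "hook lam 1 2 > 0"
  shows "is_partition (tl (conjugate lam)) \<and> tl (conjugate lam) \<noteq> [] \<and>
     hook lam 1 2 = hd (tl (conjugate lam)) + length (tl (conjugate lam)) - 1"
proof -
  have c: "1 \<le> length lam" "2 \<le> lam ! 0" using pos unfolding hook_def by (auto split: if_splits)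
  have ne: "lam \<noteq> []" using c by auto
  have hd: "hd lam = lam ! 0" using ne by (simp add: hd_conv_nth)
  define g where "g = (\<lambda>j. length (filter (\<lambda>x. j \<le> x) lam))"
  have conj: "conjugate lam = map g [1..<Suc (hd lam)]" using ne unfolding conjugate_def g_def by (simp del: upt_Suc)
  have "[1..<Suc (hd lam)] = 1 # [2..<Suc (hd lam)]" using upt_conv_Cons[of 1 "Suc (hd lam)"] c hd by (simp add: numeral_2_eq_2 numeral_3_eq_3 del: upt_Suc)
  then have tlc: "tl (conjugate lam) = map g [2..<Suc (hd lam)]" using conj by simp
  have gpos: "1 \<le> g j" if "j \<le> hd lam" for j
  proof -
    have "hd lam \<in> set (filter (\<lambda>x. j \<le> x) lam)" using that ne by simp
    from length_pos_if_in_set[OF this] show ?thesis unfolding g_def by (simp only: Suc_le_eq One_nat_def)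
  qed
  have gmono: "g j' \<le> g j" if "j \<le> j'" for j j'
    unfolding g_def using that by (induction lam) auto
  have c1: "conjugate lam ! 1 = g 2" using conj_nth[OF ne, of 1] c hd unfolding g_def by (simp add: numeral_2_eq_2)
  have h: "hook lam 1 2 = lam ! 0 + g 2 - 2" using c c1 gpos[of 2] hd unfolding hook_def by simp
  have "[2..<Suc (hd lam)] = 2 # [3..<Suc (hd lam)]" using upt_conv_Cons[of 2 "Suc (hd lam)"] c hd by (simp add: numeral_2_eq_2 numeral_3_eq_3 del: upt_Suc)
  then have hdv: "hd (tl (conjugate lam)) = g 2" using tlc by simp
  have len: "length (tl (conjugate lam)) = hd lam - 1" using tlc by (simp del: upt_Suc)
  have sw: "sorted_wrt (\<lambda>a b. b \<le> a) (tl (conjugate lam))"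
    unfolding tlc sorted_wrt_map
    by (rule sorted_wrt_mono_rel[of _ "(<)"]) (auto intro: gmono simp del: upt_Suc)
  have "0 \<notin> set (tl (conjugate lam))"
  proof
    assume "0 \<in> set (tl (conjugate lam))"
    then have "0 \<in> g ` set [2..<Suc (hd lam)]" by (simp only: tlc set_map)
    then obtain j where "j \<in> set [2..<Suc (hd lam)]" "0 = g j" by (rule imageE)
    then have "j \<le> hd lam" by (simp del: upt_Suc)
    then show False using gpos[of j] \<open>0 = g j\<close> by simp
  qed
  then have "is_partition (tl (conjugate lam))" using sw unfolding is_partition_def by simp
  moreover have "tl (conjugate lam) \<noteq> []" using tlc c hd by simp
  ultimately show ?thesis using h hdv len hd c by simp
qed

theorem corollary3p2:
  fixes lam :: "nat list" and n :: nat
  assumes "is_partition lam" and "sum_list lam = n"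
  shows "(hook lam 2 1 > 0 \<longrightarrow>
            hook lam 2 1 \<in> occurring_vars (charpoly (tl lam)) \<and>
            (\<forall>j\<in>occurring_vars (charpoly (tl lam)). j \<le> hook lam 2 1))
       \<and> (hook lam 1 2 > 0 \<longrightarrow>
            hook lam 1 2 \<in> occurring_vars (charpoly (tl (conjugate lam))) \<and>
            (\<forall>j\<in>occurring_vars (charpoly (tl (conjugate lam))). j \<le> hook lam 1 2))"
proof (rule conjI; rule impI)
  assume "hook lam 2 1 > 0"
  then have f: "is_partition (tl lam) \<and> tl lam \<noteq> [] \<and> hook lam 2 1 = hd (tl lam) + length (tl lam) - 1"
    using first_case[OF assms(1)] by blast
  show "hook lam 2 1 \<in> occurring_vars (charpoly (tl lam)) \<and>
            (\<forall>j\<in>occurring_vars (charpoly (tl lam)). j \<le> hook lam 2 1)"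
    using main_mu f by blast
next
  assume "hook lam 1 2 > 0"
  then have f: "is_partition (tl (conjugate lam)) \<and> tl (conjugate lam) \<noteq> [] \<and>
     hook lam 1 2 = hd (tl (conjugate lam)) + length (tl (conjugate lam)) - 1"
    using second_case[OF assms(1)] by blast
  show "hook lam 1 2 \<in> occurring_vars (charpoly (tl (conjugate lam))) \<and>
            (\<forall>j\<in>occurring_vars (charpoly (tl (conjugate lam))). j \<le> hook lam 1 2)"
    using main_mu f by blast
qed

end
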